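(* Let $H\ge2$ be an integer, $E_\infty=2\sqrt{\frac{H-1}{H}}$, and for $u\le -E_\infty$ let \[ I(u)=-\frac{u}{E_\infty^2}\sqrt{u^2-E_\infty^2}-\log\!\left(-u+\sqrt{u^2-E_\infty^2}\right)+\log E_\infty . \] For each integer $k\ge0$ define $\Theta_{k,H}:\mathbb{R}\to\mathbb{R}$ by \[ \Theta_{k,H}(u)=\begin{cases}\frac12\log(H-1)-\frac{(H-2)u^2}{4(H-1)}-(k+1)I(u), & u\le -E_\infty,\\[2pt] \frac12\log(H-1)-\frac{H-2}{4(H-1)}, & u\ge -E_\infty.\end{cases} \] Then for all integers $k>0$ and all $u<-E_\infty$, $\Theta_{k,H}(u)<\Theta_{0,H}(u)$.
   Context: These functions describe the logarithmic asymptotics (normalized by $\Lambda$) of the mean number of critical values of index $k$ below level $\Lambda u$ of the $H$-spin spherical spin-glass Hamiltonian; the claim itself is a statement purely about the explicitly defined functions above. *)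

theory Defs
  imports Complex_Main
begin

definition E_inf :: "nat \<Rightarrow> real" where
  "E_inf H = 2 * sqrt ((real H - 1) / real H)"

definition I_fun :: "nat \<Rightarrow> real \<Rightarrow> real" where
  "I_fun H u = - (u / (E_inf H)^2) * sqrt (u^2 - (E_inf H)^2)
      - ln (- u + sqrt (u^2 - (E_inf H)^2)) + ln (E_inf H)"

definition Theta :: "nat \<Rightarrow> nat \<Rightarrow> real \<Rightarrow> real" where
  "Theta k H u = (if u \<le> - E_inf H
     then 1/2 * ln (real H - 1) - (real H - 2) * u^2 / (4 * (real H - 1)) - (real k + 1) * I_fun H u
     else 1/2 * ln (real H - 1) - (real H - 2) / (4 * (real H - 1)))"

end

theory Submission
  imports Defs
begin

lemma ln_bound:
  fixes y :: real assumes "y > 1"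
  shows "ln y < (y - 1/y)/2"
proof -
  let ?g = "\<lambda>y::real. (y - 1/y)/2 - ln y"
  have "?g 1 < ?g y"
  proof (rule DERIV_pos_imp_increasing_open[OF assms])
    fix x :: real assume x: "1 < x" "x < y"
    show "\<exists>z. DERIV ?g x :> z \<and> 0 < z"
    proof (intro exI conjI)
      show "DERIV ?g x :> ((1 + 1/x^2)/2 - 1/x)"
        using x by (auto intro!: derivative_eq_intros simp: field_simps power2_eq_square)
      have "(1 + 1/x^2)/2 - 1/x = (x-1)^2/(2*x^2)" using x by (simp add: field_simps power2_eq_square)
      thus "0 < (1 + 1/x^2)/2 - 1/x" using x by simp
    qed
  next
    show "continuous_on {1..y} ?g"
      by (intro continuous_intros) auto
  qed
  thus ?thesis by simp
qed

theorem corollary4p1: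
  fixes H k :: nat and u :: real
  assumes "H \<ge> 2" and "k > 0" and "u < - E_inf H"
  shows "Theta k H u < Theta 0 H u"
proof -
  define E where "E = E_inf H"
  have E0: "E > 0" using assms(1) unfolding E_def E_inf_def by auto
  define a where "a = -u/E"
  have a1: "a > 1" using assms(3) E0 unfolding a_def E_def[symmetric] by (simp add: field_simps)
  define b where "b = sqrt (a^2 - 1)"
  have b0: "b > 0" using a1 unfolding b_def by (simp add: power_one_over)
  have bb: "b^2 = a^2 - 1" using a1 unfolding b_def by simp
  have sq: "sqrt (u^2 - E^2) = E * b"
  proof -
    have "u^2 - E^2 = E^2 * (a^2 - 1)" using E0 unfolding a_def by (simp add: field_simps)
    thus ?thesis using E0 unfolding b_def by (simp add: real_sqrt_mult)
  qed
  have Ival: "I_fun H u = a * b - ln (a + b)"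
  proof -
    have "-u + E*b = E * (a+b)" using E0 unfolding a_def by (simp add: field_simps)
    moreover have "a + b > 0" using a1 b0 by simp
    ultimately have "ln (-u + E*b) = ln E + ln (a+b)" using E0 by (simp add: ln_mult)
    moreover have "- (u / E^2) * (E*b) = a*b" using E0 unfolding a_def by (simp add: field_simps power2_eq_square)
    ultimately show ?thesis unfolding I_fun_def E_def[symmetric] sq by simp
  qed
  have ab: "(a + b) * (a - b) = 1" using bb by (simp add: algebra_simps power2_eq_square)
  have "ln (a + b) < ((a+b) - 1/(a+b))/2" using a1 b0 by (intro ln_bound) simp
  also have "1/(a+b) = a - b" using ab a1 b0 by (simp add: field_simps)
  hence "((a+b) - 1/(a+b))/2 = b" by simp
  finally have "ln (a+b) < b" .
  moreover have "b < a * b" using a1 b0 by simp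
  ultimately have Ipos: "I_fun H u > 0" using Ival by simp
  have "u \<le> - E_inf H" using assms(3) by simp
  thus ?thesis unfolding Theta_def using Ipos assms(2) by simp
qed

end
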